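(* Let $1 \le a \le b$ be integers and let $G$ be a graph. If $G$ has an $[a,b]$-labelling, then $G$ has an $[a,b]$-labelling in which every edge label is at most $2a$.
   Context: For a graph $G$ and integers $1 \le a \le b$, an $[a,b]$-labelling of $G$ is an assignment of a nonnegative integer label to each edge of $G$ such that (i) for every vertex $v$, the sum of the labels of the edges incident to $v$ is even and lies in $[2a,2b]$, and (ii) the subgraph consisting of all vertices of $G$ and the edges with nonzero label is connected. (A graph has an $[a,b]$-labelling iff it has a closed walk visiting every vertex at least $a$ and at most $b$ times, the label of an edge being the number of traversals.) *)

theory Defs
  imports Main
begin

definition simple_graph :: "'a set \<Rightarrow> 'a set set \<Rightarrow> bool" where
  "simple_graph V E \<longleftrightarrow> finite V \<and> (\<forall>e\<in>E. e \<subseteq> V \<and> card e = 2)"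

definition connected_graph :: "'a set \<Rightarrow> 'a set set \<Rightarrow> bool" where
  "connected_graph V F \<longleftrightarrow>
     (\<forall>u\<in>V. \<forall>v\<in>V. (u, v) \<in> {(x, y). {x, y} \<in> F}\<^sup>*)"

definition ab_labelling :: "'a set \<Rightarrow> 'a set set \<Rightarrow> nat \<Rightarrow> nat \<Rightarrow> ('a set \<Rightarrow> nat) \<Rightarrow> bool" where
  "ab_labelling V E a b lab \<longleftrightarrow>
     (\<forall>v\<in>V. even (\<Sum>e\<in>{e\<in>E. v \<in> e}. lab e)
            \<and> 2 * a \<le> (\<Sum>e\<in>{e\<in>E. v \<in> e}. lab e)
            \<and> (\<Sum>e\<in>{e\<in>E. v \<in> e}. lab e) \<le> 2 * b)
     \<and> connected_graph V {e\<in>E. lab e \<noteq> 0}"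

end

theory Submission
  imports Defs
begin

theorem lemma3p1:
  fixes V :: "'a set" and E :: "'a set set" and a b :: nat and lab :: "'a set \<Rightarrow> nat"
  assumes "simple_graph V E" and "1 \<le> a" and "a \<le> b"
    and "ab_labelling V E a b lab"
  shows "\<exists>lab'. ab_labelling V E a b lab' \<and> (\<forall>e\<in>E. lab' e \<le> 2 * a)"
proof -
  define L where "L = (\<lambda>e. if lab e \<le> 2 * a then lab e else if even (lab e) then 2 * a else 2 * a - 1)"
  have fE: "finite E"
  proof -
    have "E \<subseteq> Pow V" using assms(1) unfolding simple_graph_def by auto
    moreover have "finite V" using assms(1) unfolding simple_graph_def by auto
    ultimately show ?thesis by (meson finite_Pow_iff finite_subset)
  qed
  have Lle: "\<And>e. L e \<le> lab e" unfolding L_def by auto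
  have Lpar: "\<And>e. even (lab e + L e)" unfolding L_def using assms(2) by auto
  have Lnz: "\<And>e. (L e = 0) = (lab e = 0)" unfolding L_def using assms(2) by auto
  have Lbig: "\<And>e. lab e > 2 * a \<Longrightarrow> L e \<ge> 2 * a - 1" unfolding L_def by auto
  have "ab_labelling V E a b L"
    unfolding ab_labelling_def
  proof (intro conjI ballI)
    fix v assume v: "v \<in> V"
    define S where "S = {e\<in>E. v \<in> e}"
    have fS: "finite S" using fE unfolding S_def by auto
    have h: "even (sum lab S)" "2 * a \<le> sum lab S" "sum lab S \<le> 2 * b"
      using assms(4) v unfolding ab_labelling_def S_def by auto
    have "even (sum (\<lambda>e. lab e + L e) S)" using Lpar by (simp add: dvd_sum)
    then have ev: "even (sum L S)" using h(1) by (simp add: sum.distrib)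
    then show "even (\<Sum>e\<in>{e\<in>E. v \<in> e}. L e)" unfolding S_def .
    have "sum L S \<le> sum lab S" using Lle by (simp add: sum_mono)
    then show "(\<Sum>e\<in>{e\<in>E. v \<in> e}. L e) \<le> 2 * b" using h(3) unfolding S_def by simp
    show "2 * a \<le> (\<Sum>e\<in>{e\<in>E. v \<in> e}. L e)"
    proof (cases "\<forall>e\<in>S. lab e \<le> 2 * a")
      case True
      then have "sum L S = sum lab S" unfolding L_def by (intro sum.cong) auto
      then show ?thesis using h(2) unfolding S_def by simp
    next
      case False
      then obtain e where e: "e \<in> S" "lab e > 2 * a" by auto
      have "L e \<le> sum L S" using fS e(1) by (simp add: member_le_sum)
      then have "2 * a - 1 \<le> sum L S" using Lbig[OF e(2)] by simp
      moreover obtain k where "sum L S = 2 * k" using ev by (auto elim: evenE)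
      ultimately have "2 * a \<le> sum L S" using assms(2) by presburger
      then show ?thesis unfolding S_def .
    qed
  next
    have "{e\<in>E. L e \<noteq> 0} = {e\<in>E. lab e \<noteq> 0}" using Lnz by auto
    then show "connected_graph V {e\<in>E. L e \<noteq> 0}" using assms(4) unfolding ab_labelling_def by simp
  qed
  moreover have "\<forall>e\<in>E. L e \<le> 2 * a" unfolding L_def by auto
  ultimately show ?thesis by blast
qed

end
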